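(* For any choice of $(\hat\imath,\hat\jmath)\in\mathcal E$ defining $B_1$, the matrix $B_1$ is invertible, and $$\mathfrak d(i,\ell)=\frac{(e^{\mathsf T}B_1^{-1})_\ell}{(e^{\mathsf T}B_1^{-1})_i}\qquad\forall\,i,\ell\in\mathcal I.$$ Moreover $(e^{\mathsf T}B_1^{-1})_i>0$ for all $i\in\mathcal I$.
   Context: Network: $\mathcal I=\{1,\dots,I\}$, $\mathcal J=\{1,\dots,J\}$, edges $\mathcal E\subset\mathcal I\times\mathcal J$ with the bipartite graph $\mathcal G=(\mathcal I\cup\mathcal J,\mathcal E)$ a tree; $i\sim j$ iff $(i,j)\in\mathcal E$; $\mathcal J(i)=\{j:i\sim j\}$, $\mathcal I(j)=\{i:i\sim j\}$; $\mathbb R^{\mathcal G}$ denotes arrays in $\mathbb R^{I\times J}$ vanishing off $\mathcal E$. Service rates $\mu_{ij}>0$ for $i\sim j$. $e$ is the all-ones vector. Let $\mathcal D=\{(\alpha,\beta)\in\mathbb R^I\times\mathbb R^J:\sum_i\alpha_i=\sum_j\beta_j\}$ and $\Psi:\mathcal D\to\mathbb R^{\mathcal G}$ the unique linear map with $\sum_j\Psi_{ij}(\alpha,\beta)=\alpha_i$, $\sum_i\Psi_{ij}(\alpha,\beta)=\beta_j$. For $(\hat\imath,\hat\jmath)\in\mathcal E$, $B_1\in\mathbb R^{I\times I}$ and $B_2\in\mathbb R^{I\times J}$ are the unique matrices with column $\hat\jmath$ of $B_2$ zero and $\sum_{j\in\mathcal J(i)}\mu_{ij}\Psi_{ij}(\alpha,\beta)=(B_1\alpha+B_2\beta)_i$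 for all $i$ and $(\alpha,\beta)\in\mathcal D$. Gains: for $i\ne i'$ in $\mathcal I$ with unique shortest path $(i_1,j_1,i_2,\dots,j_{m-1},i_m)$ in $\mathcal G$ from $i=i_1$ to $i'=i_m$, $\mathfrak d(i,i'):=\prod_{k=1}^{m-1}\mu_{i_kj_k}/\mu_{i_{k+1}j_k}$; and $\mathfrak d(i,i):=1$. *)

theory Defs
  imports "HOL-Analysis.Analysis"
begin

text \<open>Vertices of the bipartite graph: Inl i for i in I, Inr j for j in J.
  The index sets I and J are the finite types 'i and 'j; the edge set is E.\<close>

fun adj :: "('i \<times> 'j) set \<Rightarrow> ('i + 'j) \<Rightarrow> ('i + 'j) \<Rightarrow> bool" where
  "adj E (Inl i) (Inr j) = ((i, j) \<in> E)"
| "adj E (Inr j) (Inl i) = ((i, j) \<in> E)"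
| "adj E _ _ = False"

definition is_walk :: "('i \<times> 'j) set \<Rightarrow> ('i + 'j) list \<Rightarrow> bool" where
  "is_walk E p \<longleftrightarrow> p \<noteq> [] \<and> (\<forall>k. Suc k < length p \<longrightarrow> adj E (p ! k) (p ! Suc k))"

definition graph_connected :: "('i \<times> 'j) set \<Rightarrow> bool" where
  "graph_connected E \<longleftrightarrow> (\<forall>u v. \<exists>p. is_walk E p \<and> hd p = u \<and> last p = v)"

definition is_cycle :: "('i \<times> 'j) set \<Rightarrow> ('i + 'j) list \<Rightarrow> bool" where
  "is_cycle E c \<longleftrightarrow> length c \<ge> 3 \<and> distinct c \<and> is_walk E c \<and> adj E (last c) (hd c)"

definition is_tree :: "('i \<times> 'j) set \<Rightarrow> bool" where
  "is_tree E \<longleftrightarrow> graph_connected E \<and> (\<nexists>c. is_cycle E c)"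

definition shortest_path :: "('i \<times> 'j) set \<Rightarrow> ('i + 'j) \<Rightarrow> ('i + 'j) \<Rightarrow> ('i + 'j) list \<Rightarrow> bool" where
  "shortest_path E u v p \<longleftrightarrow> is_walk E p \<and> hd p = u \<and> last p = v \<and>
     (\<forall>q. is_walk E q \<and> hd q = u \<and> last q = v \<longrightarrow> length p \<le> length q)"

fun path_gain :: "('i \<Rightarrow> 'j \<Rightarrow> real) \<Rightarrow> ('i + 'j) list \<Rightarrow> real" where
  "path_gain mu (Inl i # Inr j # Inl i' # rest) = mu i j / mu i' j * path_gain mu (Inl i' # rest)"
| "path_gain mu _ = 1"

definition gain :: "('i \<times> 'j) set \<Rightarrow> ('i \<Rightarrow> 'j \<Rightarrow> real) \<Rightarrow> 'i \<Rightarrow> 'i \<Rightarrow> real" where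
  "gain E mu i i' = (if i = i' then 1
     else path_gain mu (THE p. shortest_path E (Inl i) (Inl i') p))"

definition Dset :: "((real^'i) \<times> (real^'j)) set" where
  "Dset = {(a, b). (\<Sum>i\<in>UNIV. a $ i) = (\<Sum>j\<in>UNIV. b $ j)}"

definition Psi :: "('i \<times> 'j) set \<Rightarrow> real^'i \<Rightarrow> real^'j \<Rightarrow> 'i \<Rightarrow> 'j \<Rightarrow> real" where
  "Psi E a b = (THE x. (\<forall>i j. (i, j) \<notin> E \<longrightarrow> x i j = 0) \<and>
      (\<forall>i. (\<Sum>j\<in>UNIV. x i j) = a $ i) \<and> (\<forall>j. (\<Sum>i\<in>UNIV. x i j) = b $ j))"

definition B_pair :: "('i \<times> 'j) set \<Rightarrow> ('i \<Rightarrow> 'j \<Rightarrow> real) \<Rightarrow> 'j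
     \<Rightarrow> (real^'i^'i) \<times> (real^'j^'i)" where
  "B_pair E mu jhat = (THE (B1, B2). (\<forall>i. B2 $ i $ jhat = 0) \<and>
      (\<forall>(a, b) \<in> Dset. \<forall>i. (\<Sum>j\<in>{j. (i, j) \<in> E}. mu i j * Psi E a b i j) = (B1 *v a + B2 *v b) $ i))"

definition B1 :: "('i::finite \<times> 'j::finite) set \<Rightarrow> ('i \<Rightarrow> 'j \<Rightarrow> real) \<Rightarrow> 'j \<Rightarrow> real^'i^'i" where
  "B1 E mu jhat = fst (B_pair E mu jhat)"

end

theory Submission
  imports Defs
begin

fun wk :: "('i \<times> 'j) set \<Rightarrow> ('i + 'j) list \<Rightarrow> bool" where
  "wk E [] = False"
| "wk E [x] = True"
| "wk E (x # y # xs) = (adj E x y \<and> wk E (y # xs))"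

lemma is_walk_wk: "is_walk E p = wk E p"
proof (induction p rule: wk.induct)
  case (1 E) then show ?case by (simp add: is_walk_def)
next
  case (2 E x) then show ?case by (simp add: is_walk_def)
next
  case (3 E x y xs)
  have "(\<forall>k. Suc k < length (x # y # xs) \<longrightarrow> adj E ((x # y # xs) ! k) ((x # y # xs) ! Suc k))
     \<longleftrightarrow> adj E x y \<and> (\<forall>k. Suc k < length (y # xs) \<longrightarrow> adj E ((y # xs) ! k) ((y # xs) ! Suc k))"
    (is "?L \<longleftrightarrow> ?R")
  proof
    assume L: ?L
    show ?R
    proof
      show "adj E x y" using L[rule_format, of 0] by simp
      show "\<forall>k. Suc k < length (y # xs) \<longrightarrow> adj E ((y # xs) ! k) ((y # xs) ! Suc k)"
      proof (intro allI impI)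
        fix k assume "Suc k < length (y # xs)"
        then show "adj E ((y # xs) ! k) ((y # xs) ! Suc k)" using L[rule_format, of "Suc k"] by simp
      qed
    qed
  next
    assume R: ?R
    show ?L
    proof (intro allI impI)
      fix k assume "Suc k < length (x # y # xs)"
      then show "adj E ((x # y # xs) ! k) ((x # y # xs) ! Suc k)"
        using R by (cases k) auto
    qed
  qed
  then show ?case using 3 by (simp add: is_walk_def)
qed

lemma adj_sym: "adj E u v = adj E v u"
  by (cases u; cases v) auto

lemma adj_irrefl: "\<not> adj E u u"
  by (cases u) auto

lemma adj_mono: "S \<subseteq> E \<Longrightarrow> adj S u v \<Longrightarrow> adj E u v"
  by (cases u; cases v) auto

lemma wk_Cons: "wk E (x # xs) \<longleftrightarrow> xs = [] \<or> (adj E x (hd xs) \<and> wk E xs)"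
  by (cases xs) auto

lemma wk_mono: assumes "S \<subseteq> E" shows "wk S p \<Longrightarrow> wk E p"
proof (induction p)
  case (Cons x xs) then show ?case using adj_mono[OF assms, of x "hd xs"] unfolding wk_Cons by blast
qed auto

lemma wk_append: "wk E (xs @ ys) \<longleftrightarrow>
   (xs = [] \<longrightarrow> wk E ys) \<and> (ys = [] \<longrightarrow> wk E xs) \<and>
   (xs \<noteq> [] \<and> ys \<noteq> [] \<longrightarrow> wk E xs \<and> wk E ys \<and> adj E (last xs) (hd ys))"
proof (induction xs)
  case Nil then show ?case by (cases ys) auto
next
  case (Cons x xs)
  show ?case
  proof (cases "xs = []")
    case True
    then show ?thesis by (cases ys) auto
  next
    case False
    have "wk E ((x # xs) @ ys) \<longleftrightarrow> adj E x (hd xs) \<and> wk E (xs @ ys)"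
      using False by (simp add: wk_Cons)
    also have "\<dots> \<longleftrightarrow> adj E x (hd xs) \<and> ((ys = [] \<longrightarrow> wk E xs) \<and>
       (ys \<noteq> [] \<longrightarrow> wk E xs \<and> wk E ys \<and> adj E (last xs) (hd ys)))"
      using Cons.IH False by simp
    finally show ?thesis using False by (auto simp: wk_Cons)
  qed
qed

lemma wk_suffix: "wk E (xs @ ys) \<Longrightarrow> ys \<noteq> [] \<Longrightarrow> wk E ys"
  by (cases "xs = []") (auto simp: wk_append)

lemma wk_prefix: "wk E (xs @ ys) \<Longrightarrow> xs \<noteq> [] \<Longrightarrow> wk E xs"
  by (cases "ys = []") (auto simp: wk_append)

lemma wk_rev: "wk E xs \<Longrightarrow> wk E (rev xs)"
proof (induction xs)
  case Nil then show ?case by simp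
next
  case (Cons x xs)
  show ?case
  proof (cases "xs = []")
    case True then show ?thesis by simp
  next
    case False
    have "wk E (rev xs)" using Cons False by (simp add: wk_Cons)
    moreover have "adj E x (hd xs)" using Cons False by (simp add: wk_Cons)
    ultimately have "adj E (hd xs) x" by (simp add: adj_sym)
    with \<open>wk E (rev xs)\<close> show ?thesis using False by (simp add: wk_append last_rev)
  qed
qed

lemma wk_glue: assumes "wk E xs" "wk E ys" "last xs = hd ys" shows "wk E (xs @ tl ys)"
proof (cases ys)
  case Nil then show ?thesis using assms by simp
next
  case (Cons y ys')
  show ?thesis
  proof (cases "ys' = []")
    case True then show ?thesis using Cons assms by simp
  next
    case False
    have "wk E ys'" "adj E y (hd ys')" using assms(2) Cons False by (simp_all add: wk_Cons)
    moreover have "xs \<noteq> []" using assms(1) by (cases xs) auto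
    ultimately show ?thesis using Cons assms False by (simp add: wk_append)
  qed
qed

lemma wk_const:
  assumes "\<And>u v. adj E u v \<Longrightarrow> \<phi> u = \<phi> v" "wk E p"
  shows "\<phi> (hd p) = \<phi> (last p)"
  using assms(2)
proof (induction p)
  case Nil then show ?case by simp
next
  case (Cons x xs) show ?case
  proof (cases "xs = []")
    case True then show ?thesis by simp
  next
    case False
    then have "adj E x (hd xs)" "wk E xs" using Cons.prems by (simp_all add: wk_Cons)
    then show ?thesis using Cons.IH assms(1) False by simp
  qed
qed

lemma connected_const:
  assumes "graph_connected E" "\<And>u v. adj E u v \<Longrightarrow> \<phi> u = \<phi> v"
  shows "\<phi> u = \<phi> v"
proof -
  obtain p where "is_walk E p" "hd p = u" "last p = v" using assms(1) unfolding graph_connected_def by blast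
  then show ?thesis using wk_const[of E \<phi> p] assms(2) by (simp add: is_walk_wk)
qed


lemma wk_nonempty: "wk E p \<Longrightarrow> p \<noteq> []"
  by (cases p) auto

lemma dp:
  assumes nc: "\<nexists>c. is_cycle E c"
  shows "distinct p \<Longrightarrow> distinct q \<Longrightarrow> wk E p \<Longrightarrow> wk E q \<Longrightarrow> hd p = hd q \<Longrightarrow> last p = last q \<Longrightarrow> p = q"
proof (induction p arbitrary: q)
  case Nil then show ?case by simp
next
  case (Cons u p')
  obtain q' where q: "q = u # q'" using Cons.prems wk_nonempty by (cases q) auto
  show ?case
  proof (cases "p' = []")
    case True
    show ?thesis
    proof (cases "q' = []")
      case True then show ?thesis using q \<open>p' = []\<close> by simp
    next
      case False
      then have "last q \<in> set q'" using q by simp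
      moreover have "last q = u" using Cons.prems \<open>p' = []\<close> by simp
      ultimately show ?thesis using Cons.prems(2) q by simp
    qed
  next
    case pne: False
    have qne: "q' \<noteq> []"
    proof
      assume "q' = []"
      then have "last p' = u" using Cons.prems q pne by simp
      then have "u \<in> set p'" using pne by (metis last_in_set)
      then show False using Cons.prems(1) by simp
    qed
    have wp': "wk E p'" and aup: "adj E u (hd p')" using Cons.prems(3) pne by (simp_all add: wk_Cons)
    have wq': "wk E q'" and auq: "adj E u (hd q')" using Cons.prems(4) q qne by (simp_all add: wk_Cons)
    have lastpq: "last p' = last q'" using Cons.prems(6) q pne qne by simp
    show ?thesis
    proof (cases "hd p' = hd q'")
      case True
      have "p' = q'" using Cons.IH[of q'] Cons.prems q wp' wq' True lastpq by simp
      then show ?thesis using q by simp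
    next
      case hdne: False
      have "\<exists>x\<in>set q'. x \<in> set p'" using lastpq pne qne by (metis last_in_set)
      then obtain qa x qb where qs: "q' = qa @ x # qb" and xp: "x \<in> set p'" and qa: "\<forall>y\<in>set qa. y \<notin> set p'"
        using split_list_first_prop[of q' "\<lambda>y. y \<in> set p'"] by blast
      obtain pa pb where ps: "p' = pa @ x # pb" using xp split_list by metis
      define c where "c = u # pa @ x # rev qa"
      have dp': "distinct p'" and up: "u \<notin> set p'" using Cons.prems(1) by simp_all
      have dq': "distinct q'" and uq: "u \<notin> set q'" using Cons.prems(2) q by simp_all
      have "distinct c" using dp' up uq dq' qa unfolding c_def ps qs by auto
      moreover have "length c \<ge> 3"
      proof -
        have "pa \<noteq> [] \<or> qa \<noteq> []" using hdne ps qs by auto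
        then show ?thesis unfolding c_def by (auto simp: Suc_le_eq)
      qed
      moreover have "wk E c"
      proof -
        have w1: "wk E (u # pa @ [x])" using wk_prefix[of E "u # pa @ [x]" pb] Cons.prems(3) ps by simp
        have "wk E (qa @ [x])" using wk_prefix[of E "qa @ [x]" qb] wq' qs by simp
        then have w2: "wk E (x # rev qa)" using wk_rev by fastforce
        have "wk E ((u # pa @ [x]) @ tl (x # rev qa))" using wk_glue[OF w1 w2] by simp
        then show ?thesis unfolding c_def by simp
      qed
      moreover have "adj E (last c) (hd c)"
      proof (cases "qa = []")
        case True then show ?thesis using auq qs unfolding c_def by (simp add: adj_sym)
      next
        case False then show ?thesis using auq qs unfolding c_def by (simp add: adj_sym last_rev)
      qed
      ultimately have "is_cycle E c" by (simp add: is_cycle_def is_walk_wk)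
      then show ?thesis using nc by blast
    qed
  qed
qed

lemma shortest_distinct:
  assumes "shortest_path E u v p" shows "distinct p"
proof (rule ccontr)
  assume "\<not> distinct p"
  then obtain xs ys zs y where p: "p = xs @ [y] @ ys @ [y] @ zs" using not_distinct_decomp by blast
  have wp: "wk E p" using assms by (simp add: shortest_path_def is_walk_wk)
  have w1: "wk E (xs @ [y])" using wk_prefix[of E "xs @ [y]" "ys @ y # zs"] wp p by simp
  have w2: "wk E (y # zs)" using wk_suffix[of E "xs @ y # ys" "y # zs"] wp p by simp
  have "wk E ((xs @ [y]) @ tl (y # zs))" using wk_glue[OF w1 w2] by simp
  then have wq: "is_walk E (xs @ y # zs)" by (simp add: is_walk_wk)
  have "hd (xs @ y # zs) = u" using assms p by (cases xs) (auto simp: shortest_path_def)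
  moreover have "last (xs @ y # zs) = v" using assms p by (cases zs) (auto simp: shortest_path_def)
  ultimately have "length p \<le> length (xs @ y # zs)" using assms wq unfolding shortest_path_def by blast
  then show False using p by simp
qed

lemma shortest_exists:
  assumes "graph_connected E" shows "\<exists>p. shortest_path E u v p"
proof -
  obtain p0 where "is_walk E p0 \<and> hd p0 = u \<and> last p0 = v" using assms unfolding graph_connected_def by blast
  then obtain p where "is_walk E p \<and> hd p = u \<and> last p = v"
    and "\<forall>q. is_walk E q \<and> hd q = u \<and> last q = v \<longrightarrow> length p \<le> length q"
    using ex_has_least_nat[of "\<lambda>p. is_walk E p \<and> hd p = u \<and> last p = v" p0 length] by blast
  then show ?thesis unfolding shortest_path_def by blast
qed

lemma shortest_unique:
  assumes "is_tree E" shows "\<exists>!p. shortest_path E u v p"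
proof -
  obtain p where p: "shortest_path E u v p" using shortest_exists assms is_tree_def by blast
  moreover have "q = p" if "shortest_path E u v q" for q
  proof -
    have nc: "\<nexists>c. is_cycle E c" using assms is_tree_def by blast
    show ?thesis using dp[OF nc, of q p] shortest_distinct[OF that] shortest_distinct[OF p] that p
      by (simp add: shortest_path_def is_walk_wk)
  qed
  ultimately show ?thesis by blast
qed


lemma distinct_length_le:
  fixes p :: "('i::finite + 'j::finite) list"
  shows "distinct p \<Longrightarrow> length p \<le> CARD('i + 'j)"
  by (metis distinct_card card_mono finite subset_UNIV)

lemma cycle_from_long:
  assumes pd: "distinct p" and pw: "wk S p" and pl: "length p \<ge> 2"
    and maxl: "\<And>q. distinct q \<Longrightarrow> wk S q \<Longrightarrow> length q \<le> length p"
    and deg: "\<And>v. adj S (last p) v \<Longrightarrow> \<exists>v'. v' \<noteq> v \<and> adj S (last p) v'"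
  shows "\<exists>c. is_cycle S c"
proof -
  obtain p0 y t where p: "p = p0 @ [y, t]"
  proof -
    obtain t r where "rev p = t # r" using pl by (cases "rev p") auto
    moreover obtain y r' where "r = y # r'" using pl \<open>rev p = t # r\<close>
      by (cases r) (auto dest: arg_cong[of _ _ length])
    ultimately have "p = rev r' @ [y, t]" by (metis rev_rev_ident rev.simps append.assoc append_Cons append_Nil)
    then show ?thesis using that by blast
  qed
  have "wk S [y, t]" using wk_suffix[of S p0 "[y, t]"] pw p by simp
  then have "adj S t y" by (simp add: adj_sym)
  then obtain v' where v': "v' \<noteq> y" "adj S t v'" using deg p by auto
  show ?thesis
  proof (cases "v' \<in> set p")
    case False
    have "wk S (p @ [v'])" using pw v' p by (simp add: wk_append)
    moreover have "distinct (p @ [v'])" using pd False by simp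
    ultimately have "length (p @ [v']) \<le> length p" using maxl by blast
    then show ?thesis by simp
  next
    case True
    have "v' \<noteq> t" using v' adj_irrefl by metis
    then have "v' \<in> set p0" using True v' p by auto
    then obtain a b where p0: "p0 = a @ v' # b" using split_list by metis
    define c where "c = v' # b @ [y, t]"
    have pc: "p = a @ c" using p p0 c_def by simp
    have "distinct c" using pd pc by simp
    moreover have "wk S c" using wk_suffix[of S a c] pw pc c_def by simp
    moreover have "length c \<ge> 3" unfolding c_def by simp
    moreover have "adj S (last c) (hd c)" using v' unfolding c_def by simp
    ultimately show ?thesis unfolding is_cycle_def is_walk_wk by blast
  qed
qed

lemma cycle_from_degree:
  fixes S :: "('i::finite \<times> 'j::finite) set"
  assumes ne: "S \<noteq> {}"
    and deg: "\<And>u v. u \<noteq> z \<Longrightarrow> adj S u v \<Longrightarrow> \<exists>v'. v' \<noteq> v \<and> adj S u v'"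
  shows "\<exists>c. is_cycle S c"
proof -
  define P where "P = {p :: ('i + 'j) list. distinct p \<and> wk S p}"
  have fin: "finite (length ` P)"
  proof (rule finite_subset[of _ "{..CARD('i + 'j)}"])
    show "length ` P \<subseteq> {..CARD('i + 'j)}"
    proof
      fix n assume "n \<in> length ` P"
      then obtain q where "q \<in> P" "n = length q" by auto
      then have "n \<le> CARD('i + 'j)" using distinct_length_le[of q] by (simp add: P_def del: card_UNIV_sum)
      then show "n \<in> {..CARD('i + 'j)}" by simp
    qed
  qed simp
  obtain i j where ij: "(i, j) \<in> S" using ne by auto
  have e: "[Inl i, Inr j] \<in> P" using ij by (simp add: P_def)
  define m where "m = Max (length ` P)"
  have "m \<in> length ` P" unfolding m_def using fin e by (intro Max_in) auto
  then obtain p where pP: "p \<in> P" and pm: "length p = m" by auto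
  have ml: "\<And>q. q \<in> P \<Longrightarrow> length q \<le> m" unfolding m_def using fin by simp
  have "2 \<le> m" using ml[OF e] by simp
  have key: "\<exists>c. is_cycle S c" if "q \<in> P" "length q = m" "last q \<noteq> z" for q
    using that ml \<open>2 \<le> m\<close> deg[of "last q"] by (intro cycle_from_long[of q]) (auto simp: P_def)
  show ?thesis
  proof (cases "last p = z")
    case False then show ?thesis using key pP pm by blast
  next
    case True
    have "hd p \<noteq> last p"
    proof -
      obtain x r where "p = x # r" "r \<noteq> []" using pm \<open>2 \<le> m\<close> by (cases p; cases "tl p") auto
      then show ?thesis using pP by (auto simp: P_def)
    qed
    moreover have "rev p \<in> P" using pP by (simp add: P_def wk_rev)
    moreover have "p \<noteq> []" using pm \<open>2 \<le> m\<close> by auto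
    ultimately show ?thesis using key[of "rev p"] True pm by (simp add: last_rev)
  qed
qed


definition supp :: "('i \<times> 'j) set \<Rightarrow> ('i \<Rightarrow> 'j \<Rightarrow> real) \<Rightarrow> bool" where
  "supp E x \<longleftrightarrow> (\<forall>i j. (i, j) \<notin> E \<longrightarrow> x i j = 0)"

lemma nz_other:
  assumes "sum f A = 0" "finite A" "k \<in> A" "f k \<noteq> (0::real)"
  shows "\<exists>k'\<in>A. k' \<noteq> k \<and> f k' \<noteq> 0"
proof (rule ccontr)
  assume "\<not> ?thesis"
  then have "sum f (A - {k}) = 0" by (intro sum.neutral) auto
  then have "sum f A = f k" using assms sum.remove[of A k f] by simp
  then show False using assms by simp
qed

lemma cycle_mono: "S \<subseteq> E \<Longrightarrow> is_cycle S c \<Longrightarrow> is_cycle E c"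
  unfolding is_cycle_def is_walk_wk using wk_mono adj_mono by blast

lemma flow_zero:
  fixes E :: "('i::finite \<times> 'j::finite) set" and x :: "'i \<Rightarrow> 'j \<Rightarrow> real"
  assumes nc: "\<nexists>c. is_cycle E c" and sx: "supp E x"
    and cpos: "\<And>i j. (i, j) \<in> E \<Longrightarrow> c i j > 0"
    and rows: "\<And>i. (\<Sum>j\<in>UNIV. c i j * x i j) = 0"
    and cols: "\<And>j. j \<noteq> j0 \<Longrightarrow> (\<Sum>i\<in>UNIV. x i j) = 0"
  shows "x = (\<lambda>i j. 0)"
proof (rule ccontr)
  assume nz: "x \<noteq> (\<lambda>i j. 0)"
  define S where "S = {(i, j). x i j \<noteq> 0}"
  have SE: "S \<subseteq> E" using sx unfolding supp_def S_def by auto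
  have "S \<noteq> {}" using nz unfolding S_def by (auto simp: fun_eq_iff)
  moreover have "\<exists>v'. v' \<noteq> v \<and> adj S u v'" if u: "u \<noteq> Inr j0" and a: "adj S u v" for u v
  proof (cases u)
    case (Inl i)
    then obtain j where v: "v = Inr j" and ij: "x i j \<noteq> 0" using a unfolding S_def by (cases v) auto
    have "(i, j) \<in> E" using ij sx unfolding supp_def by blast
    then have "c i j > 0" by (rule cpos)
    then have "c i j * x i j \<noteq> 0" using ij by simp
    then obtain j' where "j' \<noteq> j" "c i j' * x i j' \<noteq> 0" using nz_other[OF rows[of i]] by auto
    then show ?thesis using Inl v unfolding S_def by (intro exI[of _ "Inr j'"]) auto
  next
    case (Inr j)
    then obtain i where v: "v = Inl i" and ij: "x i j \<noteq> 0" using a unfolding S_def by (cases v) auto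
    have "j \<noteq> j0" using u Inr by simp
    then obtain i' where "i' \<noteq> i" "x i' j \<noteq> 0" using nz_other[OF cols[of j]] ij by auto
    then show ?thesis using Inr v unfolding S_def by (intro exI[of _ "Inl i'"]) auto
  qed
  ultimately obtain cy where "is_cycle S cy" using cycle_from_degree[of S "Inr j0"] by blast
  then show False using nc cycle_mono[OF SE] by blast
qed

definition TT :: "('i::finite \<Rightarrow> 'j::finite \<Rightarrow> real) \<Rightarrow> ('i \<Rightarrow> 'j \<Rightarrow> real) \<Rightarrow> ('i \<Rightarrow> 'j \<Rightarrow> real) \<Rightarrow> real^('i + 'j)" where
  "TT c1 c2 x = (\<chi> u. case u of Inl i \<Rightarrow> \<Sum>j\<in>UNIV. c1 i j * x i j | Inr j \<Rightarrow> \<Sum>i\<in>UNIV. c2 i j * x i j)"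

definition ind :: "('i \<times> 'j) \<Rightarrow> 'i \<Rightarrow> 'j \<Rightarrow> real" where
  "ind e = (\<lambda>i j. if (i, j) = e then 1 else 0)"

lemma TT_Inl[simp]: "TT c1 c2 x $ Inl i = (\<Sum>j\<in>UNIV. c1 i j * x i j)"
  by (simp add: TT_def)
lemma TT_Inr[simp]: "TT c1 c2 x $ Inr j = (\<Sum>i\<in>UNIV. c2 i j * x i j)"
  by (simp add: TT_def)

lemma TT_ind: "TT c1 c2 (ind (i, j)) = c1 i j *\<^sub>R axis (Inl i) 1 + c2 i j *\<^sub>R axis (Inr j) 1"
proof (subst vec_eq_iff, intro allI)
  fix u show "TT c1 c2 (ind (i, j)) $ u = (c1 i j *\<^sub>R axis (Inl i) 1 + c2 i j *\<^sub>R axis (Inr j) 1) $ u"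
  proof (cases u)
    case (Inl i')
    have "(\<Sum>j'\<in>UNIV. c1 i' j' * ind (i, j) i' j') = (if i' = i then c1 i j else 0)"
      by (auto simp: ind_def if_distrib cong: if_cong)
    then show ?thesis using Inl by (simp add: axis_def)
  next
    case (Inr j')
    have "(\<Sum>i'\<in>UNIV. c2 i' j' * ind (i, j) i' j') = (if j' = j then c2 i j else 0)"
      by (auto simp: ind_def if_distrib cong: if_cong)
    then show ?thesis using Inr by (simp add: axis_def)
  qed
qed

lemma inner_TT_ind: "n \<bullet> TT c1 c2 (ind (i, j)) = c1 i j * n $ Inl i + c2 i j * n $ Inr j"
  by (simp add: TT_ind inner_add_right inner_axis)

lemma TT_span:
  assumes "z \<in> span ((\<lambda>e. TT c1 c2 (ind e)) ` E)"
  shows "\<exists>x. supp E x \<and> TT c1 c2 x = z"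
proof -
  define R where "R = {TT c1 c2 x | x. supp E x}"
  have "subspace R"
    unfolding subspace_def
  proof (intro conjI ballI allI)
    show "0 \<in> R" unfolding R_def
      by (rule CollectI, rule exI[of _ "\<lambda>i j. 0"]) (simp add: supp_def vec_eq_iff TT_def split: sum.split)
  next
    fix y1 y2 assume "y1 \<in> R" "y2 \<in> R"
    then obtain x1 x2 where "supp E x1" "y1 = TT c1 c2 x1" "supp E x2" "y2 = TT c1 c2 x2" unfolding R_def by blast
    then show "y1 + y2 \<in> R" unfolding R_def
      by (intro CollectI exI[of _ "\<lambda>i j. x1 i j + x2 i j"])
         (auto simp: supp_def vec_eq_iff TT_def distrib_left sum.distrib split: sum.split)
  next
    fix r :: real and y assume "y \<in> R"
    then obtain x where "supp E x" "y = TT c1 c2 x" unfolding R_def by blast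
    then show "r *\<^sub>R y \<in> R" unfolding R_def
      by (intro CollectI exI[of _ "\<lambda>i j. r * x i j"])
         (auto simp: supp_def vec_eq_iff TT_def sum_distrib_left algebra_simps split: sum.split)
  qed
  moreover have "(\<lambda>e. TT c1 c2 (ind e)) ` E \<subseteq> R"
    unfolding R_def by (auto simp: supp_def ind_def)
  ultimately have "span ((\<lambda>e. TT c1 c2 (ind e)) ` E) \<subseteq> R" by (rule span_minimal[rotated])
  then show ?thesis using assms unfolding R_def by blast
qed


lemma flow_exists:
  fixes E :: "('i::finite \<times> 'j::finite) set"
  assumes conn: "graph_connected E" and D: "(a, b) \<in> Dset"
  shows "\<exists>x. supp E x \<and> (\<forall>i. (\<Sum>j\<in>UNIV. x i j) = a $ i) \<and> (\<forall>j. (\<Sum>i\<in>UNIV. x i j) = b $ j)"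
proof -
  define one :: "'i \<Rightarrow> 'j \<Rightarrow> real" where "one = (\<lambda>_ _. 1)"
  define z :: "real^('i+'j)" where "z = (\<chi> u. case u of Inl i \<Rightarrow> a $ i | Inr j \<Rightarrow> b $ j)"
  define G where "G = (\<lambda>e. TT one one (ind e)) ` E"
  have "z \<in> span G"
  proof (rule ccontr)
    assume zn: "z \<notin> span G"
    have ss: "span G \<subset> span (insert z G)"
      using zn span_mono[of G "insert z G"] span_base[of z "insert z G"] by blast
    obtain n where nz: "n \<noteq> 0" and nsp: "n \<in> span (insert z G)"
      and orth: "\<And>y. y \<in> span G \<Longrightarrow> orthogonal n y"
      using orthogonal_to_subspace_exists_gen[OF ss] by blast
    define D' where "D' = {y :: real^('i+'j). (\<Sum>i\<in>UNIV. y $ Inl i) = (\<Sum>j\<in>UNIV. y $ Inr j)}"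
    have "subspace D'" unfolding subspace_def D'_def by (auto simp: sum.distrib simp flip: sum_distrib_left)
    moreover have "insert z G \<subseteq> D'"
      using D by (auto simp: D'_def z_def Dset_def G_def TT_ind one_def axis_def)
    ultimately have nD: "n \<in> D'" using nsp span_minimal by blast
    have edge: "n $ Inl i + n $ Inr j = 0" if "(i, j) \<in> E" for i j
    proof -
      have "TT one one (ind (i, j)) \<in> span G" unfolding G_def using that by (intro span_base) auto
      then have "n \<bullet> TT one one (ind (i, j)) = 0" using orth unfolding orthogonal_def by blast
      then show ?thesis by (simp add: inner_TT_ind one_def)
    qed
    define \<phi> where "\<phi> u = (case u of Inl i \<Rightarrow> n $ Inl i | Inr j \<Rightarrow> - n $ Inr j)" for u
    have "\<phi> u = \<phi> v" if "adj E u v" for u v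
    proof (cases u; cases v)
      fix i j assume "u = Inl i" "v = Inr j"
      then show ?thesis using that edge[of i j] by (simp add: \<phi>_def add_eq_0_iff)
    next
      fix i j assume "u = Inr j" "v = Inl i"
      then show ?thesis using that edge[of i j] by (simp add: \<phi>_def add_eq_0_iff)
    qed (use that in auto)
    then have phic: "\<phi> u = \<phi> (Inl undefined)" for u using connected_const[OF conn] by blast
    define c where "c = \<phi> (Inl undefined)"
    have nl: "n $ Inl i = c" for i using phic[of "Inl i"] by (simp add: \<phi>_def c_def)
    have nr: "n $ Inr j = - c" for j using phic[of "Inr j"] by (simp add: \<phi>_def c_def)
    have "real CARD('i) * c = - (real CARD('j) * c)" using nD by (simp add: D'_def nl nr)
    then have "(real CARD('i) + real CARD('j)) * c = 0" by (simp add: algebra_simps)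
    moreover have "real CARD('i) + real CARD('j) > 0" by (simp add: add_pos_pos)
    ultimately have "c = 0" by simp
    have "n $ u = 0" for u using \<open>c = 0\<close> nl nr by (cases u) auto
    then have "n = 0" by (simp add: vec_eq_iff)
    with nz show False by simp
  qed
  then obtain x where "supp E x" "TT one one x = z" unfolding G_def using TT_span by blast
  moreover have "(\<forall>i. (\<Sum>j\<in>UNIV. x i j) = a $ i) \<and> (\<forall>j. (\<Sum>i\<in>UNIV. x i j) = b $ j)"
  proof (intro conjI allI)
    fix i show "(\<Sum>j\<in>UNIV. x i j) = a $ i"
      using arg_cong[OF \<open>TT one one x = z\<close>, of "\<lambda>y. y $ Inl i"] by (simp add: one_def z_def)
  next
    fix j show "(\<Sum>i\<in>UNIV. x i j) = b $ j"
      using arg_cong[OF \<open>TT one one x = z\<close>, of "\<lambda>y. y $ Inr j"] by (simp add: one_def z_def)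
  qed
  ultimately show ?thesis by blast
qed


lemma sgn_div_pos: fixes a b :: real assumes "sgn a = sgn b" "b \<noteq> 0" shows "a / b > 0"
proof (cases "b > 0")
  case True then have "a > 0" using assms by (simp add: sgn_if split: if_splits)
  then show ?thesis using True by simp
next
  case False then have "b < 0" using assms by simp
  then have "a < 0" using assms by (simp add: sgn_if split: if_splits)
  then show ?thesis using \<open>b < 0\<close> by (simp add: divide_neg_neg)
qed

lemma potential:
  fixes E :: "('i::finite \<times> 'j::finite) set" and mu :: "'i \<Rightarrow> 'j \<Rightarrow> real"
  assumes tree: "is_tree E" and mu_pos: "\<And>i j. (i, j) \<in> E \<Longrightarrow> mu i j > 0"
  shows "\<exists>v w. (\<forall>i. v i > 0) \<and> (\<forall>j. w j > 0) \<and> w jhat = 1 \<and> (\<forall>i j. (i, j) \<in> E \<longrightarrow> v i * mu i j = w j)"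
proof -
  have conn: "graph_connected E" and nc: "\<nexists>c. is_cycle E c" using tree by (auto simp: is_tree_def)
  define m1 :: "'i \<Rightarrow> 'j \<Rightarrow> real" where "m1 = (\<lambda>_ _. -1)"
  define z :: "real^('i+'j)" where "z = axis (Inr jhat) 1"
  define H where "H = (\<lambda>e. TT mu m1 (ind e)) ` E"
  have zn: "z \<notin> span H"
  proof
    assume "z \<in> span H"
    then obtain x where sx: "supp E x" and tx: "TT mu m1 x = z" unfolding H_def using TT_span by blast
    have rows: "(\<Sum>j\<in>UNIV. mu i j * x i j) = 0" for i
      using arg_cong[OF tx, of "\<lambda>y. y $ Inl i"] by (simp add: z_def axis_def)
    have colz: "(\<Sum>i\<in>UNIV. x i j) = (if j = jhat then -1 else 0)" for j
    proof -
      have "(\<Sum>i\<in>UNIV. - x i j) = (if j = jhat then 1 else 0)"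
        using arg_cong[OF tx, of "\<lambda>y. y $ Inr j"] by (simp add: z_def axis_def m1_def)
      then show ?thesis by (simp add: sum_negf split: if_splits)
    qed
    have "x = (\<lambda>i j. 0)" using flow_zero[OF nc sx mu_pos rows, of jhat] colz by simp
    then show False using colz[of jhat] by simp
  qed
  have ss: "span H \<subset> span (insert z H)"
    using zn span_mono[of H "insert z H"] span_base[of z "insert z H"] by blast
  obtain n where nz: "n \<noteq> 0" and orth: "\<And>y. y \<in> span H \<Longrightarrow> orthogonal n y"
    using orthogonal_to_subspace_exists_gen[OF ss] by blast
  have edge: "n $ Inr j = mu i j * n $ Inl i" if "(i, j) \<in> E" for i j
  proof -
    have "TT mu m1 (ind (i, j)) \<in> span H" unfolding H_def using that by (intro span_base) auto
    then have "n \<bullet> TT mu m1 (ind (i, j)) = 0" using orth unfolding orthogonal_def by blast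
    then show ?thesis by (simp add: inner_TT_ind m1_def)
  qed
  define \<phi> where "\<phi> u = sgn (n $ u)" for u
  have "\<phi> u = \<phi> v" if "adj E u v" for u v
  proof (cases u; cases v)
    fix i j assume "u = Inl i" "v = Inr j"
    then show ?thesis using that edge[of i j] mu_pos[of i j] by (simp add: \<phi>_def sgn_mult)
  next
    fix i j assume "u = Inr j" "v = Inl i"
    then show ?thesis using that edge[of i j] mu_pos[of i j] by (simp add: \<phi>_def sgn_mult)
  qed (use that in auto)
  then have "\<phi> u = \<phi> (Inr jhat)" for u by (rule connected_const[OF conn])
  then have phic: "sgn (n $ u) = sgn (n $ Inr jhat)" for u unfolding \<phi>_def .
  define s where "s = n $ Inr jhat"
  obtain u0 where u0: "n $ u0 \<noteq> 0" using nz by (auto simp: vec_eq_iff)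
  have "s \<noteq> 0"
  proof
    assume "s = 0"
    then have "sgn (n $ u0) = 0" using phic[of u0] unfolding s_def by simp
    then show False using u0 by (simp add: sgn_eq_0_iff)
  qed
  have pos: "n $ u / s > 0" for u using sgn_div_pos[OF phic[of u]] \<open>s \<noteq> 0\<close> unfolding s_def .
  show ?thesis
  proof (intro exI[of _ "\<lambda>i. n $ Inl i / s"] exI[of _ "\<lambda>j. n $ Inr j / s"] conjI allI impI)
    fix i j assume "(i, j) \<in> E"
    then show "n $ Inl i / s * mu i j = n $ Inr j / s" using edge by simp
  next
    fix i show "n $ Inl i / s > 0" by (rule pos)
  next
    fix j show "n $ Inr j / s > 0" by (rule pos)
  next
    show "n $ Inr jhat / s = 1" using \<open>s \<noteq> 0\<close> unfolding s_def by simp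
  qed
qed


lemma path_gain_walk:
  fixes mu :: "'i \<Rightarrow> 'j \<Rightarrow> real"
  assumes vpos: "\<And>i. v i > 0" and cons: "\<And>i j. (i, j) \<in> E \<Longrightarrow> v i * mu i j = w j"
    and mu_pos: "\<And>i j. (i, j) \<in> E \<Longrightarrow> mu i j > 0"
  shows "\<forall>a. wk E p \<longrightarrow> hd p = Inl a \<longrightarrow> last p = Inl b \<longrightarrow> path_gain mu p = v b / v a"
proof (induction "length p" arbitrary: p rule: less_induct)
  case less
  show ?case
  proof (intro allI impI)
    fix a assume w: "wk E p" and h: "hd p = Inl a" and l: "last p = Inl b"
    obtain rest where p: "p = Inl a # rest" using w h by (cases p) auto
    show "path_gain mu p = v b / v a"
    proof (cases rest)
      case Nil then show ?thesis using p l vpos[of a] by simp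
    next
      case (Cons y rest')
      obtain j where y: "y = Inr j" and e1: "(a, j) \<in> E" using w p Cons by (cases y) auto
      show ?thesis
      proof (cases rest')
        case Nil then show ?thesis using p Cons l y by simp
      next
        case (Cons y' rest'')
        obtain i' where y': "y' = Inl i'" and e2: "(i', j) \<in> E"
          using w p \<open>rest = y # rest'\<close> y Cons by (cases y') auto
        have w': "wk E (Inl i' # rest'')" using w p \<open>rest = y # rest'\<close> y Cons y' by simp
        have "path_gain mu (Inl i' # rest'') = v b / v i'"
          using less[of "Inl i' # rest''"] p \<open>rest = y # rest'\<close> y Cons y' w' l by simp
        moreover have "v a * mu a j = v i' * mu i' j" using cons[OF e1] cons[OF e2] by simp
        then have "mu a j / mu i' j = v i' / v a" using mu_pos[OF e2] vpos[of a] by (simp add: field_simps)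
        ultimately show ?thesis using p \<open>rest = y # rest'\<close> y Cons y' vpos[of i'] by simp
      qed
    qed
  qed
qed

lemma flow_unique:
  fixes E :: "('i::finite \<times> 'j::finite) set"
  assumes tree: "is_tree E" and sx: "supp E x" and sy: "supp E y"
    and r: "\<And>i. (\<Sum>j\<in>UNIV. x i j) = (\<Sum>j\<in>UNIV. y i j)"
    and c: "\<And>j. (\<Sum>i\<in>UNIV. x i j) = (\<Sum>i\<in>UNIV. y i j)"
  shows "x = y"
proof -
  have nc: "\<nexists>c. is_cycle E c" using tree by (simp add: is_tree_def)
  define d where "d = (\<lambda>i j. x i j - y i j)"
  have "supp E d" using sx sy by (simp add: supp_def d_def)
  moreover have "(\<Sum>j\<in>UNIV. 1 * d i j) = 0" for i using r[of i] by (simp add: d_def sum_subtractf)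
  moreover have "(\<Sum>i\<in>UNIV. d i j) = 0" for j using c[of j] by (simp add: d_def sum_subtractf)
  ultimately have "d = (\<lambda>i j. 0)"
    using flow_zero[OF nc, of d "\<lambda>_ _. 1" undefined] by simp
  then show ?thesis by (auto simp: d_def fun_eq_iff)
qed

definition isflow :: "('i::finite \<times> 'j::finite) set \<Rightarrow> real^'i \<Rightarrow> real^'j \<Rightarrow> ('i \<Rightarrow> 'j \<Rightarrow> real) \<Rightarrow> bool" where
  "isflow E a b x \<longleftrightarrow> (\<forall>i j. (i, j) \<notin> E \<longrightarrow> x i j = 0) \<and>
      (\<forall>i. (\<Sum>j\<in>UNIV. x i j) = a $ i) \<and> (\<forall>j. (\<Sum>i\<in>UNIV. x i j) = b $ j)"

lemma Psi_flow:
  assumes tree: "is_tree E" and D: "(a, b) \<in> Dset"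
  shows "isflow E a b (Psi E a b)"
proof -
  have "\<exists>!x. isflow E a b x"
  proof -
    obtain x where "supp E x" "\<forall>i. (\<Sum>j\<in>UNIV. x i j) = a $ i" "\<forall>j. (\<Sum>i\<in>UNIV. x i j) = b $ j"
      using flow_exists[of E a b] tree D by (auto simp: is_tree_def)
    then have "isflow E a b x" by (simp add: isflow_def supp_def)
    moreover have "y = x" if "isflow E a b y" for y
      using flow_unique[OF tree, of y x] that \<open>isflow E a b x\<close> by (simp add: isflow_def supp_def)
    ultimately show ?thesis by blast
  qed
  then show ?thesis unfolding Psi_def isflow_def[symmetric] by (rule theI')
qed

lemma isflow_unique:
  assumes tree: "is_tree E" and "isflow E a b x" "isflow E a b y" shows "x = y"
  using flow_unique[OF tree, of x y] assms by (simp add: isflow_def supp_def)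

lemma Psi_eq:
  assumes tree: "is_tree E" and D: "(a, b) \<in> Dset" and f: "isflow E a b x"
  shows "Psi E a b = x"
  using isflow_unique[OF tree Psi_flow[OF tree D] f] .

lemma Dset_iff: "(a, b) \<in> Dset \<longleftrightarrow> sum (($) a) UNIV = sum (($) b) UNIV"
  by (simp add: Dset_def)

lemma axis_sum: "(\<Sum>i\<in>UNIV. (axis k (1::real) :: real^'n) $ i) = 1"
  by (simp add: axis_def)


lemma sum_delta_l: "(\<Sum>k\<in>UNIV. (f k :: real) * (if i = k then 1 else 0)) = f (i :: 'a :: finite)"
proof -
  have "(\<Sum>k\<in>UNIV. f k * (if i = k then 1 else 0)) = (\<Sum>k\<in>UNIV. if k = i then f k else 0)"
    by (rule sum.cong) auto
  then show ?thesis by simp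
qed

lemma sum_delta_r: "(\<Sum>k\<in>UNIV. (f k :: real) * (if k = i then 1 else 0)) = f (i :: 'a :: finite)"
proof -
  have "(\<Sum>k\<in>UNIV. f k * (if k = i then 1 else 0)) = (\<Sum>k\<in>UNIV. if k = i then f k else 0)"
    by (rule sum.cong) auto
  then show ?thesis by simp
qed

lemma axis_app: "(axis k (1::real) :: real^'n::finite) $ i = (if i = k then 1 else 0)"
  by (simp add: axis_def)

lemma swap_lin: "(\<Sum>j\<in>A. (\<Sum>k\<in>B. (c k :: real) * g k j)) = (\<Sum>k\<in>B. c k * (\<Sum>j\<in>A. g k j))"
  by (subst sum.swap) (simp add: sum_distrib_left)

lemma swap_lin2: "(\<Sum>j\<in>A. m j * (\<Sum>k\<in>B. (c k :: real) * g k j)) = (\<Sum>k\<in>B. c k * (\<Sum>j\<in>A. m j * g k j))"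
proof -
  have "(\<Sum>j\<in>A. m j * (\<Sum>k\<in>B. c k * g k j)) = (\<Sum>j\<in>A. (\<Sum>k\<in>B. c k * (m j * g k j)))"
    by (simp add: sum_distrib_left algebra_simps)
  also have "\<dots> = (\<Sum>k\<in>B. c k * (\<Sum>j\<in>A. m j * g k j))" by (rule swap_lin)
  finally show ?thesis .
qed

definition Mv :: "('i::finite \<times> 'j::finite) set \<Rightarrow> ('i \<Rightarrow> 'j \<Rightarrow> real) \<Rightarrow> real^'i \<Rightarrow> real^'j \<Rightarrow> 'i \<Rightarrow> real" where
  "Mv E mu a b i = (\<Sum>j\<in>{j. (i, j) \<in> E}. mu i j * Psi E a b i j)"

definition Bs1 :: "('i::finite \<times> 'j::finite) set \<Rightarrow> ('i \<Rightarrow> 'j \<Rightarrow> real) \<Rightarrow> 'j \<Rightarrow> real^'i^'i" where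
  "Bs1 E mu jhat = (\<chi> i i'. Mv E mu (axis i' 1) (axis jhat 1) i)"

definition Bs2 :: "('i::finite \<times> 'j::finite) set \<Rightarrow> ('i \<Rightarrow> 'j \<Rightarrow> real) \<Rightarrow> 'j \<Rightarrow> real^'j^'i" where
  "Bs2 E mu jhat = (\<chi> i j. Mv E mu 0 (axis j 1 - axis jhat 1) i)"

lemma D1: "(axis i' 1 :: real^'i::finite, axis jhat 1 :: real^'j::finite) \<in> Dset"
  by (simp add: Dset_def axis_sum)

lemma D2: "(0 :: real^'i::finite, axis j 1 - axis jhat 1 :: real^'j::finite) \<in> Dset"
  by (simp add: Dset_def axis_sum sum_subtractf)

lemma rep:
  fixes E :: "('i::finite \<times> 'j::finite) set"
  assumes tree: "is_tree E" and D: "(a, b) \<in> Dset"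
  shows "Mv E mu a b i = (Bs1 E mu jhat *v a + Bs2 E mu jhat *v b) $ i"
proof -
  define P1 where "P1 i' = Psi E (axis i' 1) (axis jhat 1 :: real^'j)" for i' :: 'i
  define P2 where "P2 j' = Psi E (0 :: real^'i) (axis j' 1 - axis jhat 1 :: real^'j)" for j'
  have f1: "isflow E (axis i' 1) (axis jhat 1) (P1 i')" for i'
    unfolding P1_def by (rule Psi_flow[OF tree D1])
  have f2: "isflow E 0 (axis j' 1 - axis jhat 1) (P2 j')" for j'
    unfolding P2_def by (rule Psi_flow[OF tree D2])
  define y where "y i j = (\<Sum>i'\<in>UNIV. a $ i' * P1 i' i j) + (\<Sum>j'\<in>UNIV. b $ j' * P2 j' i j)" for i j
  have "isflow E a b y"
    unfolding isflow_def
  proof (intro conjI allI impI)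
    fix i j assume "(i, j) \<notin> E"
    then show "y i j = 0" using f1 f2 by (simp add: y_def isflow_def)
  next
    fix i
    have "(\<Sum>j\<in>UNIV. y i j) = (\<Sum>i'\<in>UNIV. a $ i' * (\<Sum>j\<in>UNIV. P1 i' i j)) + (\<Sum>j'\<in>UNIV. b $ j' * (\<Sum>j\<in>UNIV. P2 j' i j))"
      unfolding y_def sum.distrib swap_lin ..
    also have "\<dots> = (\<Sum>i'\<in>UNIV. a $ i' * (axis i' 1 :: real^'i) $ i)"
      using f1 f2 by (simp add: isflow_def)
    also have "\<dots> = a $ i" by (simp only: axis_app sum_delta_l)
    finally show "(\<Sum>j\<in>UNIV. y i j) = a $ i" .
  next
    fix j
    have "(\<Sum>i\<in>UNIV. y i j) = (\<Sum>i'\<in>UNIV. a $ i' * (\<Sum>i\<in>UNIV. P1 i' i j)) + (\<Sum>j'\<in>UNIV. b $ j' * (\<Sum>i\<in>UNIV. P2 j' i j))"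
      unfolding y_def sum.distrib swap_lin ..
    also have "\<dots> = (\<Sum>i'\<in>UNIV. a $ i' * (axis jhat 1 :: real^'j) $ j) + (\<Sum>j'\<in>UNIV. b $ j' * (axis j' 1 - axis jhat 1 :: real^'j) $ j)"
      using f1 f2 by (simp add: isflow_def)
    also have "\<dots> = (\<Sum>i'\<in>UNIV. a $ i') * (axis jhat 1 :: real^'j) $ j + (b $ j - (\<Sum>j'\<in>UNIV. b $ j') * (axis jhat 1 :: real^'j) $ j)"
    proof -
      have "(\<Sum>j'\<in>UNIV. b $ j' * (axis j' 1 - axis jhat 1 :: real^'j) $ j)
          = (\<Sum>j'\<in>UNIV. b $ j' * (if j = j' then 1 else 0)) - (\<Sum>j'\<in>UNIV. b $ j') * (axis jhat 1 :: real^'j) $ j"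
        by (simp add: right_diff_distrib sum_subtractf sum_distrib_right axis_def)
      also have "\<dots> = b $ j - (\<Sum>j'\<in>UNIV. b $ j') * (axis jhat 1 :: real^'j) $ j"
        by (simp only: sum_delta_l)
      finally show ?thesis by (simp add: sum_distrib_right)
    qed
    also have "\<dots> = b $ j" using D by (simp add: Dset_def)
    finally show "(\<Sum>i\<in>UNIV. y i j) = b $ j" .
  qed
  then have Py: "Psi E a b = y" by (rule Psi_eq[OF tree D])
  have "Mv E mu a b i = (\<Sum>i'\<in>UNIV. a $ i' * Mv E mu (axis i' 1) (axis jhat 1) i) + (\<Sum>j'\<in>UNIV. b $ j' * Mv E mu 0 (axis j' 1 - axis jhat 1) i)"
    unfolding Mv_def Py y_def distrib_left sum.distrib swap_lin2[of "\<lambda>j. mu i j"] P1_def P2_def ..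
  then show ?thesis by (simp add: Bs1_def Bs2_def matrix_vector_mult_def mult.commute)
qed


lemma mv_axis: "((A :: real^'n::finite^'m) *v axis k 1) $ i = A $ i $ k"
  by (simp add: matrix_vector_mult_def axis_def sum_delta_r)

lemma Psi_zero:
  assumes tree: "is_tree E" shows "Psi E 0 0 = (\<lambda>i j. 0)"
  by (rule Psi_eq[OF tree]) (auto simp: Dset_def isflow_def)

lemma Bs2_col: "is_tree E \<Longrightarrow> Bs2 E mu jhat $ i $ jhat = 0"
  by (simp add: Bs2_def Mv_def Psi_zero)

lemma Bpair:
  fixes E :: "('i::finite \<times> 'j::finite) set"
  assumes tree: "is_tree E"
  shows "B_pair E mu jhat = (Bs1 E mu jhat, Bs2 E mu jhat)"
  unfolding B_pair_def
proof (rule the_equality)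
  show "case (Bs1 E mu jhat, Bs2 E mu jhat) of (X1, X2) \<Rightarrow> (\<forall>i. X2 $ i $ jhat = 0) \<and>
      (\<forall>(a, b) \<in> Dset. \<forall>i. (\<Sum>j\<in>{j. (i, j) \<in> E}. mu i j * Psi E a b i j) = (X1 *v a + X2 *v b) $ i)"
    using rep[OF tree] Bs2_col[OF tree] unfolding Mv_def by auto
next
  fix p :: "(real^'i^'i) \<times> (real^'j^'i)"
  assume H: "case p of (X1, X2) \<Rightarrow> (\<forall>i. X2 $ i $ jhat = 0) \<and>
      (\<forall>(a, b) \<in> Dset. \<forall>i. (\<Sum>j\<in>{j. (i, j) \<in> E}. mu i j * Psi E a b i j) = (X1 *v a + X2 *v b) $ i)"
  obtain B1' B2' where p: "p = (B1', B2')" by (cases p)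
  have z: "B2' $ i $ jhat = 0" for i using H p by simp
  have HH: "Mv E mu a b i = (B1' *v a + B2' *v b) $ i" if "(a, b) \<in> Dset" for a b i
    using H p that unfolding Mv_def by auto
  have "B1' $ i $ i' = Bs1 E mu jhat $ i $ i'" for i i'
    using HH[OF D1, of i' jhat i] z[of i] by (simp add: mv_axis Bs1_def)
  moreover have "B2' $ i $ j = Bs2 E mu jhat $ i $ j" for i j
    using HH[OF D2, of j jhat i] z[of i] by (simp add: mv_axis Bs2_def matrix_vector_mult_diff_distrib)
  ultimately show "p = (Bs1 E mu jhat, Bs2 E mu jhat)" using p by (simp add: vec_eq_iff)
qed

lemma B1_eq: "is_tree E \<Longrightarrow> B1 E mu jhat = Bs1 E mu jhat"
  by (simp add: B1_def Bpair)


lemma sum_restrict_E: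
  fixes E :: "('i::finite \<times> 'j::finite) set"
  assumes "\<And>j. (i, j) \<notin> E \<Longrightarrow> x i j = 0"
  shows "(\<Sum>j\<in>{j. (i, j) \<in> E}. f j * x i j) = (\<Sum>j\<in>UNIV. (f j :: real) * x i j)"
  by (rule sum.mono_neutral_left) (auto simp: assms)

lemma Bs1_inj:
  fixes E :: "('i::finite \<times> 'j::finite) set"
  assumes tree: "is_tree E" and mu_pos: "\<And>i j. (i, j) \<in> E \<Longrightarrow> mu i j > 0"
    and h: "Bs1 E mu jhat *v \<alpha> = 0"
  shows "\<alpha> = 0"
proof -
  have nc: "\<nexists>c. is_cycle E c" using tree by (simp add: is_tree_def)
  define s where "s = (\<Sum>i\<in>UNIV. \<alpha> $ i)"
  define b :: "real^'j" where "b = s *\<^sub>R axis jhat 1"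
  have D: "(\<alpha>, b) \<in> Dset" using sum_delta_r[of "\<lambda>_. s" jhat] by (simp add: Dset_def b_def s_def axis_def)
  define x where "x = Psi E \<alpha> b"
  have fx: "isflow E \<alpha> b x" unfolding x_def by (rule Psi_flow[OF tree D])
  have rows: "(\<Sum>j\<in>UNIV. mu i j * x i j) = 0" for i
  proof -
    have "Mv E mu \<alpha> b i = (Bs1 E mu jhat *v \<alpha> + Bs2 E mu jhat *v b) $ i" by (rule rep[OF tree D])
    also have "\<dots> = s * Bs2 E mu jhat $ i $ jhat"
      using h by (simp add: b_def matrix_vector_mult_scaleR mv_axis)
    also have "\<dots> = 0" using Bs2_col[OF tree] by simp
    finally show ?thesis
      unfolding Mv_def x_def[symmetric] using fx sum_restrict_E[of i E x "mu i"] by (simp add: isflow_def)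
  qed
  have cols: "(\<Sum>i\<in>UNIV. x i j) = 0" if "j \<noteq> jhat" for j
    using fx that by (simp add: isflow_def b_def axis_def)
  have "supp E x" using fx by (simp add: isflow_def supp_def)
  then have "x = (\<lambda>i j. 0)" using flow_zero[OF nc _ mu_pos rows cols] by blast
  then show ?thesis using fx by (simp add: isflow_def vec_eq_iff)
qed

theorem theorem3:
  fixes E :: "('i::finite \<times> 'j::finite) set"
    and mu :: "'i \<Rightarrow> 'j \<Rightarrow> real"
    and ihat :: 'i and jhat :: 'j
  assumes tree: "is_tree E"
    and mu_pos: "\<And>i j. (i, j) \<in> E \<Longrightarrow> mu i j > 0"
    and edge: "(ihat, jhat) \<in> E"
  shows "invertible (B1 E mu jhat)
    \<and> (\<forall>i l. gain E mu i l
           = ((\<chi> k. 1) v* matrix_inv (B1 E mu jhat)) $ l / ((\<chi> k. 1) v* matrix_inv (B1 E mu jhat)) $ i)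
    \<and> (\<forall>i. ((\<chi> k. 1) v* matrix_inv (B1 E mu jhat)) $ i > 0)"
proof -
  obtain v w where vpos: "\<And>i. v i > 0" and wpos: "\<And>j. w j > 0" and w1: "w jhat = 1"
    and cons: "\<And>i j. (i, j) \<in> E \<Longrightarrow> v i * mu i j = w j"
    using potential[where E=E and mu=mu and jhat=jhat, OF tree mu_pos] by blast
  define B where "B = Bs1 E mu jhat"
  have BB: "B1 E mu jhat = B" unfolding B_def by (rule B1_eq[OF tree])
  have inv: "invertible B"
    unfolding invertible_left_inverse matrix_left_invertible_ker B_def
    using Bs1_inj[where E=E and mu=mu and jhat=jhat, OF tree mu_pos] by blast
  define vv :: "real^'i" where "vv = (\<chi> i. v i)"
  have vvB: "vv v* B = (\<chi> k. 1)"
  proof (subst vec_eq_iff, intro allI)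
    fix i'
    define x where "x = Psi E (axis i' 1 :: real^'i) (axis jhat 1 :: real^'j)"
    have fx: "isflow E (axis i' 1) (axis jhat 1) x" unfolding x_def by (rule Psi_flow[OF tree D1])
    have Bx: "B $ i $ i' = (\<Sum>j\<in>UNIV. mu i j * x i j)" for i
    proof -
      have "B $ i $ i' = (\<Sum>j\<in>{j. (i, j) \<in> E}. mu i j * x i j)"
        by (simp add: B_def Bs1_def Mv_def x_def)
      also have "\<dots> = (\<Sum>j\<in>UNIV. mu i j * x i j)"
        using fx by (intro sum_restrict_E) (simp add: isflow_def)
      finally show ?thesis .
    qed
    have tm: "v i * (mu i j * x i j) = w j * x i j" for i j
      using cons[of i j] fx by (cases "(i, j) \<in> E") (auto simp: isflow_def)
    have "(vv v* B) $ i' = (\<Sum>i\<in>UNIV. v i * (\<Sum>j\<in>UNIV. mu i j * x i j))"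
      by (simp add: vector_matrix_mult_def vv_def Bx)
    also have "\<dots> = (\<Sum>i\<in>UNIV. \<Sum>j\<in>UNIV. w j * x i j)"
      by (simp add: sum_distrib_left tm)
    also have "\<dots> = (\<Sum>j\<in>UNIV. w j * (\<Sum>i\<in>UNIV. x i j))"
      by (subst sum.swap) (simp add: sum_distrib_left)
    also have "\<dots> = (\<Sum>j\<in>UNIV. w j * (axis jhat 1 :: real^'j) $ j)" using fx by (simp add: isflow_def)
    also have "\<dots> = 1" using w1 by (simp only: axis_app sum_delta_r)
    finally show "(vv v* B) $ i' = (\<chi> k. (1::real)) $ i'" by simp
  qed
  have "B ** matrix_inv B = mat 1"
    using inv unfolding invertible_def matrix_inv_def by (rule someI_ex[THEN conjunct1])
  then have ev: "(\<chi> k. 1) v* matrix_inv B = vv"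
    using vvB vector_matrix_mul_assoc[of vv B "matrix_inv B"] by simp
  have gain: "gain E mu i l = v l / v i" for i l
  proof (cases "i = l")
    case True then show ?thesis using vpos[of i] by (simp add: gain_def)
  next
    case False
    define p where "p = (THE p. shortest_path E (Inl i) (Inl l) p)"
    have sp: "shortest_path E (Inl i) (Inl l) p" unfolding p_def by (rule theI'[OF shortest_unique[OF tree]])
    have "is_walk E p \<and> hd p = Inl i \<and> last p = Inl l" using sp unfolding shortest_path_def by blast
    then have wp: "wk E p" and hp: "hd p = Inl i" and lp: "last p = Inl l" by (simp_all add: is_walk_wk)
    have allg: "\<forall>a. wk E p \<longrightarrow> hd p = Inl a \<longrightarrow> last p = Inl l \<longrightarrow> path_gain mu p = v l / v a"
      by (rule path_gain_walk[OF vpos cons mu_pos])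
    have "path_gain mu p = v l / v i" using allg wp hp lp by simp
    then show ?thesis using False by (simp add: gain_def p_def)
  qed
  show ?thesis unfolding BB ev using inv gain vpos by (simp add: vv_def)
qed

end
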